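(* Let $P_0,P_1,P_2\in\mathbb H$ be three points not lying on a common geodesic, labelled so that $\chi:=\langle P_0\tilde\times P_1,P_2\rangle>0$, and let $\varepsilon\in\{-1,1\}$. For $i\in\mathbb Z/3\mathbb Z$ let $$R_i:=\frac{\sqrt{1-2\langle P_{i+1},P_{i+2}\rangle}\,(P_{i+1}+P_{i+2})+\varepsilon\, P_{i+1}\tilde\times P_{i+2}}{\sqrt3\,\bigl(1-\langle P_{i+1},P_{i+2}\rangle\bigr)}\in\mathbb H$$ (the centroid of the equilateral triangle $P_{i+1}P_{i+2}Q_i$ with $Q_i=\frac{-\langle P_{i+1},P_{i+2}\rangle(P_{i+1}+P_{i+2})+\varepsilon\sqrt{1-2\langle P_{i+1},P_{i+2}\rangle}\,P_{i+1}\tilde\times P_{i+2}}{1-\langle P_{i+1},P_{i+2}\rangle}$), so that $R_0R_1R_2$ is the Napoleonization of $P_0P_1P_2$. If the triangle $R_0R_1R_2$ is equilateral, i.e. $\langle R_0,R_1\rangle=\langle R_1,R_2\rangle=\langle R_2,R_0\rangle$, then $P_0P_1P_2$ is equilateral, i.e. $\langle P_0,P_1\rangle=\langle P_1,P_2\rangle=\langle P_2,P_0\rangle$.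
   Context: On $\mathbb R^3$ the Minkowski form is $\langle v,w\rangle=-v_1w_1+v_2w_2+v_3w_3$. The hyperbolic plane is the upper sheet $\mathbb H=\{P\in\mathbb R^3:\langle P,P\rangle=-1,\ P_1\ge 1\}$, with distance $\operatorname{arccosh}(-\langle P,Q\rangle)$. The hyperbolic cross product is $v\tilde\times w:=J(v\times w)$, where $\times$ is the Euclidean cross product and $J=\mathrm{diag}(-1,1,1)$. The centroid of a triangle with vertices $A,B,C\in\mathbb H$ is $(A+B+C)/\sqrt{-\langle A+B+C,A+B+C\rangle}$. A triangle $ABC$ in $\mathbb H$ is equilateral if $\langle A,B\rangle=\langle B,C\rangle=\langle C,A\rangle$. The sign $\varepsilon$ is used for all three sides (equilateral triangles all erected on the same side). *)

theory Defs
  imports "HOL-Analysis.Analysis" "HOL-Analysis.Cross3"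
begin

definition mink :: "real^3 \<Rightarrow> real^3 \<Rightarrow> real" where
  "mink v w = - (v$1 * w$1) + v$2 * w$2 + v$3 * w$3"

definition Jmat :: "real^3 \<Rightarrow> real^3" where
  "Jmat v = vector [- (v$1), v$2, v$3]"

definition hcross :: "real^3 \<Rightarrow> real^3 \<Rightarrow> real^3" where
  "hcross v w = Jmat (cross3 v w)"

definition hyp_plane :: "(real^3) set" where
  "hyp_plane = {P. mink P P = -1 \<and> P$1 \<ge> 1}"

text \<open>A geodesic of the hyperboloid model is the intersection with a plane through
  the origin; three points lie on a common geodesic iff they are linearly dependent.\<close>
definition on_common_geodesic :: "real^3 \<Rightarrow> real^3 \<Rightarrow> real^3 \<Rightarrow> bool" where
  "on_common_geodesic A B C \<longleftrightarrow> (\<exists>n::real^3. n \<noteq> 0 \<and> n \<bullet> A = 0 \<and> n \<bullet> B = 0 \<and> n \<bullet> C = 0)"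

definition napR :: "real \<Rightarrow> real^3 \<Rightarrow> real^3 \<Rightarrow> real^3" where
  "napR \<epsilon> A B =
     (1 / (sqrt 3 * (1 - mink A B))) *\<^sub>R
       (sqrt (1 - 2 * mink A B) *\<^sub>R (A + B) + \<epsilon> *\<^sub>R hcross A B)"

end

theory Submission
  imports Defs
begin


lemma hc1: "hcross A B $ 1 = -(A$2 * B$3 - A$3 * B$2)"
  and hc2: "hcross A B $ 2 = A$3 * B$1 - A$1 * B$3"
  and hc3: "hcross A B $ 3 = A$1 * B$2 - A$2 * B$1"
  by (simp_all add: hcross_def Jmat_def cross3_def vector_def)

lemma mink_sym: "mink v w = mink w v" by (simp add: mink_def algebra_simps)
lemma mink_add1: "mink (u+v) w = mink u w + mink v w" by (simp add: mink_def algebra_simps)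
lemma mink_add2: "mink w (u+v) = mink w u + mink w v" by (simp add: mink_def algebra_simps)
lemma mink_scale1: "mink (r *\<^sub>R u) w = r * mink u w" by (simp add: mink_def algebra_simps)
lemma mink_scale2: "mink w (r *\<^sub>R u) = r * mink w u" by (simp add: mink_def algebra_simps)
lemma hc_self1: "mink (hcross A B) A = 0" by (simp add: mink_def hc1 hc2 hc3 algebra_simps)
lemma hc_self2: "mink (hcross A B) B = 0" by (simp add: mink_def hc1 hc2 hc3 algebra_simps)
lemma hc_cyc: "mink (hcross A B) C = mink (hcross B C) A" by (simp add: mink_def hc1 hc2 hc3 algebra_simps)
lemma hc_hc: "mink (hcross A B) (hcross C D) = mink A D * mink B C - mink A C * mink B D"
  by (simp add: mink_def hc1 hc2 hc3 algebra_simps)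
lemma hc_sq: "(mink (hcross A B) C)^2 = -(mink A A * mink B B * mink C C + 2 * mink A B * mink B C * mink C A
   - mink A A * (mink B C)^2 - mink B B * (mink C A)^2 - mink C C * (mink A B)^2)"
  by (simp add: mink_def hc1 hc2 hc3 power2_eq_square algebra_simps)

lemma hyp_neg: assumes "A \<in> hyp_plane" "B \<in> hyp_plane" shows "mink A B \<le> 0"
proof -
  have a: "A$1^2 = 1 + A$2^2 + A$3^2" "A$1 \<ge> 1" using assms(1) by (auto simp: hyp_plane_def mink_def power2_eq_square)
  have b: "B$1^2 = 1 + B$2^2 + B$3^2" "B$1 \<ge> 1" using assms(2) by (auto simp: hyp_plane_def mink_def power2_eq_square)
  have "(A$2 * B$2 + A$3 * B$3)^2 \<le> (A$1 * B$1)^2"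
  proof -
    have "(A$2 * B$2 + A$3 * B$3)^2 + (A$2 * B$3 - A$3 * B$2)^2 = (A$2^2 + A$3^2) * (B$2^2+B$3^2)"
      by (simp add: power2_eq_square algebra_simps)
    also have "\<dots> \<le> (A$1 * B$1)^2" unfolding power_mult_distrib a(1) b(1)
      by (intro mult_mono) auto
    finally show ?thesis by (smt (verit) zero_le_power2)
  qed
  hence "A$2 * B$2 + A$3 * B$3 \<le> A$1 * B$1"
    using a(2) b(2) by (smt (verit) mult_nonneg_nonneg power2_le_imp_le)
  thus ?thesis by (simp add: mink_def)
qed



definition NN :: "real \<Rightarrow> real \<Rightarrow> real \<Rightarrow> real \<Rightarrow> real \<Rightarrow> real \<Rightarrow> real" where
  "NN u v w x y t = x * y * (u + v + w - 1) + t * (x + y) - (w + u * v)"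

lemma key:
  fixes u v w x y z t :: real
  assumes u0: "u \<le> 0" and v0: "v \<le> 0" and w0: "w \<le> 0"
    and x0: "x \<ge> 0" and y0: "y \<ge> 0" and z0: "z \<ge> 0"
    and xu: "x^2 = 1 - 2 * u" and yv: "y^2 = 1 - 2 * v" and zw: "z^2 = 1 - 2 * w"
    and tt: "t^2 = 1 - 2 * u * v * w - u^2 - v^2 - w^2"
    and h1: "NN u v w x y t / (3 * (1-u) * (1-v)) = NN v w u y z t / (3 * (1-v) * (1-w))"
    and h2: "NN v w u y z t / (3 * (1-v) * (1-w)) = NN w u v z x t / (3 * (1-w) * (1-u))"
  shows "u = v \<and> v = w"
proof -
  have U: "u = (1 - x^2)/2" and V: "v = (1-y^2)/2" and W: "w = (1-z^2)/2" using xu yv zw by auto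
  define K where "K = (x^2+y^2+z^2-1)/2 * (x * y * z - x - y - z) - t * (x * y+y * z+z * x-1)"
  have d1: "(1-w) * NN u v w x y t - (1-u) * NN v w u y z t = (x - z)/2 * K"
    unfolding NN_def K_def U V W by (simp add: field_simps power2_eq_square)
  have d2: "(1-u) * NN v w u y z t - (1-v) * NN w u v z x t = (y - x)/2 * K"
    unfolding NN_def K_def U V W by (simp add: field_simps power2_eq_square)
  have "NN u v w x y t * (3 * (1-v) * (1-w)) = NN v w u y z t * (3 * (1-u) * (1-v))"
    using h1 u0 v0 w0 by (simp add: frac_eq_eq)
  hence "(3 * (1-v)) * ((1-w) * NN u v w x y t) = (3 * (1-v)) * ((1-u) * NN v w u y z t)"
    by (simp add: algebra_simps)
  hence "(1-w) * NN u v w x y t = (1-u) * NN v w u y z t"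
    using v0 by simp
  hence e1: "(x - z) * K = 0" using d1 by simp
  have "NN v w u y z t * (3 * (1-w) * (1-u)) = NN w u v z x t * (3 * (1-v) * (1-w))"
    using h2 u0 v0 w0 by (simp add: frac_eq_eq)
  hence "(3 * (1-w)) * ((1-u) * NN v w u y z t) = (3 * (1-w)) * ((1-v) * NN w u v z x t)"
    by (simp add: algebra_simps)
  hence "(1-u) * NN v w u y z t = (1-v) * NN w u v z x t"
    using w0 by simp
  hence e2: "(y - x) * K = 0" using d2 by simp
  have xyz: "x = y \<and> y = z"
  proof (cases "K = 0")
    case False
    then show ?thesis using e1 e2 by simp
  next
    case True
    define S where "S = (x^2+y^2+z^2-1)/2"
    define Uu where "Uu = x * y * z - x - y - z"
    define Vv where "Vv = x * y+y * z+z * x-1"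
    have "S * Uu = t * Vv" using True unfolding K_def S_def Uu_def Vv_def by simp
    hence "(S * Uu)^2 - t^2 * Vv^2 = 0" by (simp add: power_mult_distrib)
    moreover have "(S * Uu)^2 - t^2 * Vv^2 = (x^2+1) * (y^2+1) * (z^2+1)/4 * ((x-y)^2 * ((x+y)^2/2 + z^2 - 1) + (y-z)^2 * ((y+z)^2/2 + x^2 - 1) + (z-x)^2 * ((z+x)^2/2 + y^2 - 1))"
      unfolding tt S_def Uu_def Vv_def U V W by (simp add: field_simps power2_eq_square)
    ultimately have "(x^2+1) * (y^2+1) * (z^2+1)/4 * ((x-y)^2 * ((x+y)^2/2 + z^2 - 1) + (y-z)^2 * ((y+z)^2/2 + x^2 - 1) + (z-x)^2 * ((z+x)^2/2 + y^2 - 1)) = 0"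
      by simp
    moreover have "(x^2+1) * (y^2+1) * (z^2+1)/4 \<noteq> 0"
      by (smt (verit) zero_le_power2 divide_eq_0_iff mult_eq_0_iff)
    ultimately have s0: "(x-y)^2 * ((x+y)^2/2 + z^2 - 1) + (y-z)^2 * ((y+z)^2/2 + x^2 - 1) + (z-x)^2 * ((z+x)^2/2 + y^2 - 1) = 0"
      by simp
    have x1: "x^2 \<ge> 1" "y^2 \<ge> 1" "z^2 \<ge> 1" using xu yv zw u0 v0 w0 by auto
    have x1': "x \<ge> 1" "y \<ge> 1" "z \<ge> 1"
      using power2_le_imp_le[of 1 x] power2_le_imp_le[of 1 y] power2_le_imp_le[of 1 z] x1 x0 y0 z0 by auto
    have sq: "(x+y)^2 \<ge> 2^2" "(y+z)^2 \<ge> 2^2" "(z+x)^2 \<ge> 2^2"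
      using x1' by (intro power_mono; simp)+
    have c1: "(x+y)^2/2 + z^2 - 1 > 0" "(y+z)^2/2 + x^2 - 1 > 0" "(z+x)^2/2 + y^2 - 1 > 0"
      using x1 sq by auto
    have n1: "(x-y)^2 * ((x+y)^2/2 + z^2 - 1) \<ge> 0" "(y-z)^2 * ((y+z)^2/2 + x^2 - 1) \<ge> 0"
      "(z-x)^2 * ((z+x)^2/2 + y^2 - 1) \<ge> 0" using c1 by auto
    have "(x-y)^2 * ((x+y)^2/2 + z^2 - 1) = 0" "(y-z)^2 * ((y+z)^2/2 + x^2 - 1) = 0"
      using s0 n1 by linarith+
    then show ?thesis using c1 by simp
  qed
  show ?thesis using xyz U V W by simp
qed

lemma napR_mink:
  assumes A: "A \<in> hyp_plane" and B: "B \<in> hyp_plane" and C: "C \<in> hyp_plane" and e: "\<epsilon>^2 = 1"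
  shows "mink (napR \<epsilon> A B) (napR \<epsilon> B C) =
    NN (mink A B) (mink B C) (mink C A) (sqrt (1 - 2 * mink A B)) (sqrt (1 - 2 * mink B C))
       (\<epsilon> * mink (hcross A B) C) / (3 * (1 - mink A B) * (1 - mink B C))"
proof -
  define x where "x = sqrt (1 - 2 * mink A B)"
  define y where "y = sqrt (1 - 2 * mink B C)"
  define k1 where "k1 = 1 / (sqrt 3 * (1 - mink A B))"
  define k2 where "k2 = 1 / (sqrt 3 * (1 - mink B C))"
  have BB: "mink B B = -1" using B by (simp add: hyp_plane_def)
  have cyc: "mink (hcross B C) A = mink (hcross A B) C" using hc_cyc by metis
  have cyc2: "mink (hcross A B) C = mink C (hcross A B)" by (rule mink_sym)
  have "mink (napR \<epsilon> A B) (napR \<epsilon> B C) = k1 * k2 * (x * y * mink (A+B) (B+C)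
      + x * \<epsilon> * mink (A+B) (hcross B C) + \<epsilon> * y * mink (hcross A B) (B+C)
      + \<epsilon>^2 * mink (hcross A B) (hcross B C))"
    unfolding napR_def x_def[symmetric] y_def[symmetric] k1_def[symmetric] k2_def[symmetric]
    by (simp add: mink_scale1 mink_scale2 mink_add1 mink_add2 algebra_simps power2_eq_square)
  also have "mink (A+B) (B+C) = mink A B + mink B C + mink C A - 1"
    by (simp add: mink_add1 mink_add2 BB mink_sym[of A C] mink_sym[of B C])
  also have "mink (A+B) (hcross B C) = mink (hcross A B) C"
    by (simp add: mink_sym[of "A+B"] mink_add2 hc_self1 cyc)
  also have "mink (hcross A B) (B+C) = mink (hcross A B) C"
    by (simp add: mink_add2 hc_self2)
  also have "mink (hcross A B) (hcross B C) = - (mink C A + mink A B * mink B C)"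
    by (simp add: hc_hc BB mink_sym[of A C])
  also have "k1 * k2 = 1 / (3 * (1 - mink A B) * (1 - mink B C))"
    unfolding k1_def k2_def by (simp add: field_simps)
  finally show ?thesis unfolding NN_def x_def[symmetric] y_def[symmetric] using e hyp_neg[OF A B] hyp_neg[OF B C]
    by (simp add: field_simps)
qed

theorem theorem1p1:
  fixes P0 P1 P2 :: "real^3" and \<epsilon> :: real
  assumes "P0 \<in> hyp_plane" "P1 \<in> hyp_plane" "P2 \<in> hyp_plane"
    and "\<not> on_common_geodesic P0 P1 P2"
    and "mink (hcross P0 P1) P2 > 0"
    and "\<epsilon> = -1 \<or> \<epsilon> = 1"
    and "mink (napR \<epsilon> P1 P2) (napR \<epsilon> P2 P0) = mink (napR \<epsilon> P2 P0) (napR \<epsilon> P0 P1)"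
    and "mink (napR \<epsilon> P2 P0) (napR \<epsilon> P0 P1) = mink (napR \<epsilon> P0 P1) (napR \<epsilon> P1 P2)"
  shows "mink P0 P1 = mink P1 P2 \<and> mink P1 P2 = mink P2 P0"
proof -
  have e: "\<epsilon>^2 = 1" using assms(6) by auto
  define chi where "chi = mink (hcross P0 P1) P2"
  have c1: "mink (hcross P1 P2) P0 = chi" unfolding chi_def using hc_cyc by metis
  have c2: "mink (hcross P2 P0) P1 = chi" unfolding chi_def using hc_cyc by metis
  have u0: "mink P1 P2 \<le> 0" and v0: "mink P2 P0 \<le> 0" and w0: "mink P0 P1 \<le> 0"
    using hyp_neg assms(1-3) by auto
  have sq: "(\<epsilon> * chi)^2 = 1 - 2 * mink P1 P2 * mink P2 P0 * mink P0 P1 - (mink P1 P2)^2 - (mink P2 P0)^2 - (mink P0 P1)^2"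
  proof -
    have "(\<epsilon> * chi)^2 = chi^2" using e by (simp add: power_mult_distrib)
    also have "\<dots> = -(mink P0 P0 * mink P1 P1 * mink P2 P2 + 2 * mink P0 P1 * mink P1 P2 * mink P2 P0
       - mink P0 P0 * (mink P1 P2)^2 - mink P1 P1 * (mink P2 P0)^2 - mink P2 P2 * (mink P0 P1)^2)"
      unfolding chi_def by (rule hc_sq)
    also have "\<dots> = 1 - 2 * mink P1 P2 * mink P2 P0 * mink P0 P1 - (mink P1 P2)^2 - (mink P2 P0)^2 - (mink P0 P1)^2"
      using assms(1-3) by (simp add: hyp_plane_def algebra_simps)
    finally show ?thesis .
  qed
  have "mink P1 P2 = mink P2 P0 \<and> mink P2 P0 = mink P0 P1"
    apply (rule key[where x="sqrt (1 - 2 * mink P1 P2)" and y="sqrt (1 - 2 * mink P2 P0)"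
        and z="sqrt (1 - 2 * mink P0 P1)" and t="\<epsilon> * chi"])
    using u0 v0 w0 sq assms(7,8) napR_mink[OF assms(2,3,1) e] napR_mink[OF assms(3,1,2) e]
      napR_mink[OF assms(1,2,3) e] c1 c2 chi_def
    by auto
  thus ?thesis by simp
qed

end
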